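(* For every $P \in S$ of degree (in $x$) greater than $0$, one has $C_S(P) \cap R = K$.
   Context: Standing conventions: $K$ is a field, $R = K[y]$, $\sigma$ is a $K$-algebra endomorphism of $R$ with $\deg_y(\sigma(y)) > 1$, and $\delta$ is a $K$-linear $\sigma$-derivation of $R$, i.e. $\delta(ab) = \sigma(a)\delta(b) + \delta(a)b$. $S = R[x;\sigma,\delta]$ is the Ore extension (polynomials $\sum r_i x^i$, $r_i\in R$, with $xr = \sigma(r)x + \delta(r)$). Degree means degree in $x$. $C_S(P)$ is the centralizer of $P$ in $S$. *)

theory Defs
  imports "HOL-Computational_Algebra.Polynomial"
begin

text \<open>R = K[y] is the type 'a poly; S = R[x; sigma, delta] is represented by
  'a poly poly (polynomials in x with coefficients in R, written sum r_i x^i,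
  coefficients on the left), with the Ore multiplication defined below.\<close>

definition kalg_endo :: "('a::field poly \<Rightarrow> 'a poly) \<Rightarrow> bool" where
  "kalg_endo \<sigma> \<longleftrightarrow>
     (\<forall>a b. \<sigma> (a + b) = \<sigma> a + \<sigma> b) \<and>
     (\<forall>a b. \<sigma> (a * b) = \<sigma> a * \<sigma> b) \<and>
     \<sigma> 1 = 1 \<and>
     (\<forall>c a. \<sigma> (smult c a) = smult c (\<sigma> a))"

definition sigma_derivation ::
  "('a::field poly \<Rightarrow> 'a poly) \<Rightarrow> ('a poly \<Rightarrow> 'a poly) \<Rightarrow> bool" where
  "sigma_derivation \<sigma> \<delta> \<longleftrightarrow>
     (\<forall>a b. \<delta> (a + b) = \<delta> a + \<delta> b) \<and>
     (\<forall>c a. \<delta> (smult c a) = smult c (\<delta> a)) \<and>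
     (\<forall>a b. \<delta> (a * b) = \<sigma> a * \<delta> b + \<delta> a * b)"

text \<open>Left multiplication by x:  x * (sum r_i x^i) = sum (sigma(r_i) x^(i+1) + delta(r_i) x^i).\<close>
definition ore_x ::
  "('a::field poly \<Rightarrow> 'a poly) \<Rightarrow> ('a poly \<Rightarrow> 'a poly) \<Rightarrow> 'a poly poly \<Rightarrow> 'a poly poly" where
  "ore_x \<sigma> \<delta> Q = pCons 0 (map_poly \<sigma> Q) + map_poly \<delta> Q"

definition ore_mult ::
  "('a::field poly \<Rightarrow> 'a poly) \<Rightarrow> ('a poly \<Rightarrow> 'a poly) \<Rightarrow> 'a poly poly \<Rightarrow> 'a poly poly \<Rightarrow> 'a poly poly" where
  "ore_mult \<sigma> \<delta> P Q = (\<Sum>i\<le>degree P. smult (coeff P i) ((ore_x \<sigma> \<delta> ^^ i) Q))"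

definition ore_centralizer ::
  "('a::field poly \<Rightarrow> 'a poly) \<Rightarrow> ('a poly \<Rightarrow> 'a poly) \<Rightarrow> 'a poly poly \<Rightarrow> 'a poly poly set" where
  "ore_centralizer \<sigma> \<delta> P = {Q. ore_mult \<sigma> \<delta> P Q = ore_mult \<sigma> \<delta> Q P}"

end

theory Submission
  imports Defs
begin

lemma smult_sum2': "smult a (sum f S) = (\<Sum>i\<in>S. smult a (f i))"
  by (induction S rule: infinite_finite_induct) (simp_all add: smult_add_right)

lemma endo_basics:
  assumes "kalg_endo \<sigma>"
  shows "\<sigma> 0 = 0" "\<sigma> [:c:] = [:c:]"
proof -
  have "\<sigma> (0 + 0) = \<sigma> 0 + \<sigma> 0" using assms by (metis kalg_endo_def)
  then show "\<sigma> 0 = 0" by (metis add_left_cancel add.right_neutral add_0)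
  have "\<sigma> (smult c 1) = smult c (\<sigma> 1)" using assms by (metis kalg_endo_def)
  then show "\<sigma> [:c:] = [:c:]" using assms by (simp add: kalg_endo_def)
qed

lemma der_basics:
  assumes "sigma_derivation \<sigma> \<delta>" "kalg_endo \<sigma>"
  shows "\<delta> 0 = 0" "\<delta> [:c:] = 0"
proof -
  have "\<delta> (0 + 0) = \<delta> 0 + \<delta> 0" using assms by (metis sigma_derivation_def)
  then show "\<delta> 0 = 0" by (metis add_left_cancel add.right_neutral add_0)
  have "\<delta> (1 * 1) = \<sigma> 1 * \<delta> 1 + \<delta> 1 * 1" using assms(1) by (metis sigma_derivation_def)
  then have "\<delta> 1 = \<delta> 1 + \<delta> 1" using assms(2) by (simp add: kalg_endo_def)
  then have d1: "\<delta> 1 = 0" by (metis add_left_cancel add.right_neutral)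
  have "\<delta> (smult c 1) = smult c (\<delta> 1)" using assms by (metis sigma_derivation_def)
  then show "\<delta> [:c:] = 0" using d1 by simp
qed

lemma sigma_pcompose:
  assumes "kalg_endo \<sigma>"
  shows "\<sigma> r = pcompose r (\<sigma> [:0,1:])"
proof (induction r)
  case 0 then show ?case using endo_basics[OF assms] by simp
next
  case (pCons a p)
  have "pCons a p = [:a:] + [:0,1:] * p" by simp
  then have "\<sigma> (pCons a p) = \<sigma> [:a:] + \<sigma> [:0,1:] * \<sigma> p"
    using assms by (metis kalg_endo_def)
  then show ?case using pCons endo_basics[OF assms] by (simp add: pcompose_pCons)
qed

lemma sigma_iter_degree:
  assumes "kalg_endo \<sigma>"
  shows "degree ((\<sigma> ^^ n) r) = degree r * degree (\<sigma> [:0,1:]) ^ n"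
proof (induction n)
  case 0 then show ?case by simp
next
  case (Suc n)
  then show ?case
    by (simp add: sigma_pcompose[OF assms, of "(\<sigma> ^^ n) r"] degree_pcompose)
qed

lemma ore_x_const_iter:
  assumes "kalg_endo \<sigma>" "sigma_derivation \<sigma> \<delta>"
  shows "degree ((ore_x \<sigma> \<delta> ^^ i) [:r:]) \<le> i \<and> coeff ((ore_x \<sigma> \<delta> ^^ i) [:r:]) i = (\<sigma> ^^ i) r"
proof (induction i)
  case 0 then show ?case by simp
next
  case (Suc i)
  define Q where "Q = (ore_x \<sigma> \<delta> ^^ i) [:r:]"
  have s0: "\<sigma> 0 = 0" using endo_basics[OF assms(1)] by simp
  have d0: "\<delta> 0 = 0" using der_basics[OF assms(2,1)] by simp
  have dq: "degree Q \<le> i" and cq: "coeff Q i = (\<sigma> ^^ i) r" using Suc Q_def by auto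
  have co: "coeff (ore_x \<sigma> \<delta> Q) j = (case j of 0 \<Rightarrow> 0 | Suc k \<Rightarrow> \<sigma> (coeff Q k)) + \<delta> (coeff Q j)" for j
    by (simp add: ore_x_def coeff_map_poly s0 d0 coeff_pCons split: nat.split)
  have "degree (ore_x \<sigma> \<delta> Q) \<le> Suc i"
  proof (rule degree_le, intro allI impI)
    fix j assume "Suc i < j"
    then obtain k where k: "j = Suc k" "i < k" by (cases j) auto
    then have "coeff Q k = 0" "coeff Q j = 0" using dq by (auto intro: coeff_eq_0)
    then show "coeff (ore_x \<sigma> \<delta> Q) j = 0" using co k s0 d0 by simp
  qed
  moreover have "coeff (ore_x \<sigma> \<delta> Q) (Suc i) = (\<sigma> ^^ Suc i) r"
  proof -
    have "coeff Q (Suc i) = 0" using dq by (auto intro: coeff_eq_0)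
    then show ?thesis using co[of "Suc i"] cq d0 by simp
  qed
  ultimately show ?case using Q_def by simp
qed

lemma ore_x_monom_const:
  assumes "kalg_endo \<sigma>" "sigma_derivation \<sigma> \<delta>"
  shows "(ore_x \<sigma> \<delta> ^^ i) [:[:c:]:] = monom [:c:] i"
proof (induction i)
  case 0 then show ?case by (simp add: monom_0)
next
  case (Suc i)
  have s0: "\<sigma> 0 = 0" using endo_basics[OF assms(1)] by simp
  have d0: "\<delta> 0 = 0" using der_basics[OF assms(2,1)] by simp
  have "ore_x \<sigma> \<delta> (monom [:c:] i) = monom [:c:] (Suc i)"
  proof (rule poly_eqI)
    fix j
    show "coeff (ore_x \<sigma> \<delta> (monom [:c:] i)) j = coeff (monom [:c:] (Suc i)) j"
      using endo_basics(2)[OF assms(1), of c] der_basics(2)[OF assms(2,1), of c]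
      by (simp add: ore_x_def coeff_map_poly s0 d0 coeff_pCons coeff_monom split: nat.split)
  qed
  then show ?case using Suc by simp
qed

theorem lemma2p2:
  fixes \<sigma> \<delta> :: "'a::field poly \<Rightarrow> 'a poly" and P :: "'a poly poly"
  assumes "kalg_endo \<sigma>"
    and "degree (\<sigma> [:0, 1:]) > 1"
    and "sigma_derivation \<sigma> \<delta>"
    and "degree P > 0"
  shows "ore_centralizer \<sigma> \<delta> P \<inter> range (\<lambda>r. [:r:]) = range (\<lambda>c. [:[:c:]:])"
proof
  have left: "ore_mult \<sigma> \<delta> [:r:] P = smult r P" for r
    by (simp add: ore_mult_def)
  show "range (\<lambda>c. [:[:c:]:]) \<subseteq> ore_centralizer \<sigma> \<delta> P \<inter> range (\<lambda>r. [:r:])"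
  proof (rule subsetI)
    fix Q :: "'a poly poly" assume "Q \<in> range (\<lambda>c. [:[:c:]:])"
    then obtain c :: 'a where Qc: "Q = [:[:c:]:]" by auto
    have "ore_mult \<sigma> \<delta> P [:[:c:]:] = (\<Sum>i\<le>degree P. monom (coeff P i * [:c:]) i)"
      by (simp add: ore_mult_def ore_x_monom_const[OF assms(1,3)] smult_monom)
    also have "\<dots> = smult [:c:] (\<Sum>i\<le>degree P. monom (coeff P i) i)"
      by (simp add: smult_sum2' smult_monom mult.commute)
    also have "\<dots> = smult [:c:] P" by (simp add: poly_as_sum_of_monoms)
    finally have "[:[:c:]:] \<in> ore_centralizer \<sigma> \<delta> P"
      by (simp add: ore_centralizer_def left)
    then show "Q \<in> ore_centralizer \<sigma> \<delta> P \<inter> range (\<lambda>r. [:r:])" using Qc by auto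
  qed
  show "ore_centralizer \<sigma> \<delta> P \<inter> range (\<lambda>r. [:r:]) \<subseteq> range (\<lambda>c. [:[:c:]:])"
  proof clarify
    fix r assume "[:r:] \<in> ore_centralizer \<sigma> \<delta> P"
    then have eq: "ore_mult \<sigma> \<delta> P [:r:] = smult r P"
      by (simp add: ore_centralizer_def left)
    define n where "n = degree P"
    have "coeff (ore_mult \<sigma> \<delta> P [:r:]) n
        = (\<Sum>i\<le>n. coeff P i * coeff ((ore_x \<sigma> \<delta> ^^ i) [:r:]) n)"
      by (simp add: ore_mult_def coeff_sum n_def)
    also have "\<dots> = (\<Sum>i\<in>{n}. coeff P i * coeff ((ore_x \<sigma> \<delta> ^^ i) [:r:]) n)"
    proof (rule sum.mono_neutral_right)
      show "\<forall>i\<in>{..n} - {n}. coeff P i * coeff ((ore_x \<sigma> \<delta> ^^ i) [:r:]) n = 0"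
      proof
        fix i assume "i \<in> {..n} - {n}"
        then have "i < n" by auto
        then have "coeff ((ore_x \<sigma> \<delta> ^^ i) [:r:]) n = 0"
          using ore_x_const_iter[OF assms(1,3), of i r] by (auto intro: coeff_eq_0)
        then show "coeff P i * coeff ((ore_x \<sigma> \<delta> ^^ i) [:r:]) n = 0" by simp
      qed
    qed auto
    also have "\<dots> = coeff P n * (\<sigma> ^^ n) r"
      using ore_x_const_iter[OF assms(1,3), of n r] by simp
    finally have "coeff P n * (\<sigma> ^^ n) r = r * coeff P n"
      using eq by (auto simp add: mult.commute)
    moreover have "coeff P n \<noteq> 0" using assms(4) n_def by (metis degree_0 leading_coeff_neq_0 less_irrefl)
    ultimately have fix_r: "(\<sigma> ^^ n) r = r" by (simp add: mult.commute)
    have "degree r = 0"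
    proof (rule ccontr)
      assume "degree r \<noteq> 0"
      define d where "d = degree (\<sigma> [:0,1:])"
      define m where "m = degree r"
      have "n > 0" using assms(4) n_def by simp
      have "d ^ n > 1" unfolding d_def
        using one_less_power[of "degree (\<sigma> [:0,1:])" n] assms(2) \<open>n > 0\<close> by blast
      moreover have "m > 0" using \<open>degree r \<noteq> 0\<close> m_def by simp
      ultimately have "m * d ^ n > m" by simp
      moreover have "m * d ^ n = m"
      proof -
        have "m * d ^ n = degree ((\<sigma> ^^ n) r)"
          unfolding m_def d_def by (rule sigma_iter_degree[OF assms(1), symmetric])
        also have "\<dots> = m" unfolding m_def by (subst fix_r) (rule refl)
        finally show ?thesis .
      qed
      ultimately show False by simp
    qed
    then show "[:r:] \<in> range (\<lambda>c. [:[:c:]:])"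
      using degree_eq_zeroE[of r] by blast
  qed
qed

end
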